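(* Let $n$ DMUs, indexed by $J$, each use $m$ inputs (indexed by $I$) and produce $s$ outputs (indexed by $R$), with $n\ge 2(m+s)$ and all data $x_{ij}>0$, $y_{rj}>0$. Fix $o\in J$ and let $(Q_o^\star,P_o^\star,\pi^\star)$ be an optimal solution of the TAP program of the PT model $$\max\ \sum_{i\in I}Q_{io}\tau_o+\sum_{r\in R}P_{ro}\tau_o\quad\text{s.t.}\quad \sum_{j\in J}x_{ij}\pi_{jo}+Q_{io}x_{io}=x_{io}\ (i\in I),\ \ -\sum_{j\in J}y_{rj}\pi_{jo}+P_{ro}y_{ro}=-y_{ro}\ (r\in R),\ \ \pi_o,Q_o,P_o\ge0,$$ with goal price $\tau_o>0$. Define the benchmarks $\widehat x_{io}=\sum_{j\in J}x_{ij}\pi^\star_{jo}=x_{io}(1-Q^\star_{io})$ and $\widehat y_{ro}=\sum_{j\in J}y_{rj}\pi^\star_{jo}=y_{ro}(1+P^\star_{ro})$. Then assessing DMU-$o$ with the adjusted inputs $\widehat x_{io}$ and outputs $\widehat y_{ro}$ in place of $x_{io},y_{ro}$ by the PT model yields PT efficiency $\widehat E_o^{PT\star}=1$.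
   Context: The PT model's TVG (primal) program for an evaluated DMU with data $(x_{io},y_{ro})$ is $\min\sum_i v_{io}x_{io}-\sum_r u_{ro}y_{ro}$ s.t. $\sum_i v_{io}x_{ij}-\sum_r u_{ro}y_{rj}\ge0$ ($j\in J$), $x_{io}v_{io}\ge\tau_o$ ($i\in I$), $y_{ro}u_{ro}\ge\tau_o$ ($r\in R$), $v_o,u_o$ free. With an optimal solution $(v_o^\#,u_o^\#)$ for $\tau_o=1$, set $\bar t=1/\sum_i v^\#_{io}x_{io}$ and $(v_o^\star,u_o^\star)=\bar t(v_o^\#,u_o^\#)$; the PT efficiency is $E_o^{PT\star}=\sum_r u^\star_{ro}y_{ro}/\sum_i v^\star_{io}x_{io}$, equivalently $1$ minus (optimal total virtual gap)/(virtual input). *)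

theory Defs
  imports Complex_Main "HOL-Library.Cardinality"
begin

text \<open>DEA data: inputs x i j (i :: 'i input index, j :: 'j DMU index), outputs y r j.
  Index sets I, R, J are the finite types 'i, 'r, 'j, so m = CARD('i), s = CARD('r), n = CARD('j).\<close>

definition tap_feasible ::
  "('i::finite \<Rightarrow> 'j::finite \<Rightarrow> real) \<Rightarrow> ('r::finite \<Rightarrow> 'j \<Rightarrow> real) \<Rightarrow> 'j \<Rightarrow>
   ('i \<Rightarrow> real) \<Rightarrow> ('r \<Rightarrow> real) \<Rightarrow> ('j \<Rightarrow> real) \<Rightarrow> bool" where
  "tap_feasible x y k Q P \<pi> \<longleftrightarrow>
     (\<forall>i. (\<Sum>j\<in>UNIV. x i j * \<pi> j) + Q i * x i k = x i k) \<and>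
     (\<forall>r. - (\<Sum>j\<in>UNIV. y r j * \<pi> j) + P r * y r k = - y r k) \<and>
     (\<forall>j. \<pi> j \<ge> 0) \<and> (\<forall>i. Q i \<ge> 0) \<and> (\<forall>r. P r \<ge> 0)"

definition tap_obj :: "real \<Rightarrow> ('i::finite \<Rightarrow> real) \<Rightarrow> ('r::finite \<Rightarrow> real) \<Rightarrow> real" where
  "tap_obj \<tau> Q P = (\<Sum>i\<in>UNIV. Q i * \<tau>) + (\<Sum>r\<in>UNIV. P r * \<tau>)"

definition tap_optimal ::
  "real \<Rightarrow> ('i::finite \<Rightarrow> 'j::finite \<Rightarrow> real) \<Rightarrow> ('r::finite \<Rightarrow> 'j \<Rightarrow> real) \<Rightarrow> 'j \<Rightarrow>
   ('i \<Rightarrow> real) \<Rightarrow> ('r \<Rightarrow> real) \<Rightarrow> ('j \<Rightarrow> real) \<Rightarrow> bool" where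
  "tap_optimal \<tau> x y k Q P \<pi> \<longleftrightarrow> tap_feasible x y k Q P \<pi> \<and>
     (\<forall>Q' P' \<pi>'. tap_feasible x y k Q' P' \<pi>' \<longrightarrow> tap_obj \<tau> Q' P' \<le> tap_obj \<tau> Q P)"

text \<open>TVG (primal) program of the PT model: the evaluated DMU has data (xo, yo);
  the frontier constraints range over all DMUs j with data (x, y).\<close>
definition tvg_feasible ::
  "('i::finite \<Rightarrow> 'j::finite \<Rightarrow> real) \<Rightarrow> ('r::finite \<Rightarrow> 'j \<Rightarrow> real) \<Rightarrow>
   ('i \<Rightarrow> real) \<Rightarrow> ('r \<Rightarrow> real) \<Rightarrow> real \<Rightarrow> ('i \<Rightarrow> real) \<Rightarrow> ('r \<Rightarrow> real) \<Rightarrow> bool" where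
  "tvg_feasible x y xo yo \<tau> v u \<longleftrightarrow>
     (\<forall>j. (\<Sum>i\<in>UNIV. v i * x i j) - (\<Sum>r\<in>UNIV. u r * y r j) \<ge> 0) \<and>
     (\<forall>i. xo i * v i \<ge> \<tau>) \<and> (\<forall>r. yo r * u r \<ge> \<tau>)"

definition tvg_obj :: "('i::finite \<Rightarrow> real) \<Rightarrow> ('r::finite \<Rightarrow> real) \<Rightarrow> ('i \<Rightarrow> real) \<Rightarrow> ('r \<Rightarrow> real) \<Rightarrow> real" where
  "tvg_obj xo yo v u = (\<Sum>i\<in>UNIV. v i * xo i) - (\<Sum>r\<in>UNIV. u r * yo r)"

definition tvg_optimal ::
  "('i::finite \<Rightarrow> 'j::finite \<Rightarrow> real) \<Rightarrow> ('r::finite \<Rightarrow> 'j \<Rightarrow> real) \<Rightarrow>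
   ('i \<Rightarrow> real) \<Rightarrow> ('r \<Rightarrow> real) \<Rightarrow> real \<Rightarrow> ('i \<Rightarrow> real) \<Rightarrow> ('r \<Rightarrow> real) \<Rightarrow> bool" where
  "tvg_optimal x y xo yo \<tau> v u \<longleftrightarrow> tvg_feasible x y xo yo \<tau> v u \<and>
     (\<forall>v' u'. tvg_feasible x y xo yo \<tau> v' u' \<longrightarrow> tvg_obj xo yo v u \<le> tvg_obj xo yo v' u')"

text \<open>PT efficiency from an optimal solution (v#, u#) of TVG with tau = 1:
  tbar = 1 / virtual input, (v*, u*) = tbar (v#, u#), E = virtual output / virtual input.\<close>
definition pt_efficiency ::
  "('i::finite \<Rightarrow> real) \<Rightarrow> ('r::finite \<Rightarrow> real) \<Rightarrow> ('i \<Rightarrow> real) \<Rightarrow> ('r \<Rightarrow> real) \<Rightarrow> real" where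
  "pt_efficiency xo yo v u =
     (let tbar = 1 / (\<Sum>i\<in>UNIV. v i * xo i);
          vs = (\<lambda>i. tbar * v i); us = (\<lambda>r. tbar * u r)
      in (\<Sum>r\<in>UNIV. us r * yo r) / (\<Sum>i\<in>UNIV. vs i * xo i))"

definition bench_x :: "('i \<Rightarrow> 'j::finite \<Rightarrow> real) \<Rightarrow> ('j \<Rightarrow> real) \<Rightarrow> 'i \<Rightarrow> real" where
  "bench_x x \<pi> i = (\<Sum>j\<in>UNIV. x i j * \<pi> j)"

definition bench_y :: "('r \<Rightarrow> 'j::finite \<Rightarrow> real) \<Rightarrow> ('j \<Rightarrow> real) \<Rightarrow> 'r \<Rightarrow> real" where
  "bench_y y \<pi> r = (\<Sum>j\<in>UNIV. y r j * \<pi> j)"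

end

theory Submission
  imports Defs "HOL-Analysis.Analysis"
begin


lemma cone_sep:
  fixes G :: "(real^'a) set" and z :: "real^'a"
  assumes "finite G" "z \<notin> convex_cone hull G"
  shows "\<exists>a. (\<forall>g\<in>G. a \<bullet> g \<ge> 0) \<and> a \<bullet> z < 0"
proof -
  obtain a b where ab: "inner a z < b" "\<forall>x\<in>convex_cone hull G. b < inner a x"
    using separating_hyperplane_closed_point[OF convex_convex_cone_hull closed_convex_cone_hull[OF assms(1)] assms(2)] by blast
  have b0: "b < 0" using ab(2) convex_cone_hull_contains_0 by force
  have "a \<bullet> g \<ge> 0" if g: "g \<in> G" for g
  proof (rule ccontr)
    assume "\<not> ?thesis" then have neg: "a \<bullet> g < 0" by simp
    define t where "t = b / (a \<bullet> g)"
    have "t \<ge> 0" using b0 neg by (simp add: t_def divide_nonpos_neg)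
    then have "t *\<^sub>R g \<in> convex_cone hull G" using hull_inc[OF g] convex_cone_hull_mul by blast
    then have "b < a \<bullet> (t *\<^sub>R g)" using ab(2) by blast
    also have "\<dots> = b" using neg by (simp add: t_def)
    finally show False by simp
  qed
  then show ?thesis using ab(1) b0 by (intro exI[of _ a]) auto
qed

lemma pos_support:
  fixes Z :: "'j::finite \<Rightarrow> real^'a" and w :: "real^'a" and \<pi> :: "'j \<Rightarrow> real"
  assumes pi: "\<forall>j. \<pi> j \<ge> 0" and wdef: "w = (\<Sum>j\<in>UNIV. \<pi> j *\<^sub>R Z j)"
  and par: "\<And>k lam d t. \<forall>j. lam j \<ge> 0 \<Longrightarrow> \<forall>l. d$l \<ge> 0 \<Longrightarrow> t \<ge> 0 \<Longrightarrow>
         w - axis k 1 \<noteq> (\<Sum>j\<in>UNIV. lam j *\<^sub>R Z j) + d - t *\<^sub>R w"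
  shows "\<exists>p. (\<forall>l. p$l > 0) \<and> (\<forall>j. p \<bullet> Z j \<ge> 0) \<and> p \<bullet> w \<le> 0"
proof -
  define G where "G = range Z \<union> range (\<lambda>l. axis l (1::real)) \<union> {-w}"
  define S where "S = {v. \<exists>lam d t. (\<forall>j. lam j \<ge> 0) \<and> (\<forall>l. d$l \<ge> (0::real)) \<and> t \<ge> 0 \<and>
      v = (\<Sum>j\<in>UNIV. lam j *\<^sub>R Z j) + d - t *\<^sub>R w}"
  have finG: "finite G" unfolding G_def by simp
  have ccS: "convex_cone S"
    unfolding convex_cone_iff
  proof (intro conjI ballI allI impI)
    show "0 \<in> S" unfolding S_def
      by (rule CollectI, rule exI[of _ "\<lambda>_. 0"], rule exI[of _ 0], rule exI[of _ 0]) simp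
  next
    fix u v assume "u \<in> S" "v \<in> S"
    then obtain l1 d1 t1 l2 d2 t2 where
      1: "(\<forall>j. l1 j \<ge> 0) \<and> (\<forall>l. d1$l \<ge> (0::real)) \<and> t1 \<ge> 0 \<and> u = (\<Sum>j\<in>UNIV. l1 j *\<^sub>R Z j) + d1 - t1 *\<^sub>R w"
      and 2: "(\<forall>j. l2 j \<ge> 0) \<and> (\<forall>l. d2$l \<ge> (0::real)) \<and> t2 \<ge> 0 \<and> v = (\<Sum>j\<in>UNIV. l2 j *\<^sub>R Z j) + d2 - t2 *\<^sub>R w"
      unfolding S_def by blast
    show "u + v \<in> S" unfolding S_def
      apply (rule CollectI, rule exI[of _ "\<lambda>j. l1 j + l2 j"], rule exI[of _ "d1 + d2"], rule exI[of _ "t1 + t2"])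
      using 1 2 by (auto simp: scaleR_add_left sum.distrib)
  next
    fix u and c :: real assume "u \<in> S" "0 \<le> c"
    then obtain l1 d1 t1 where
      1: "(\<forall>j. l1 j \<ge> 0) \<and> (\<forall>l. d1$l \<ge> (0::real)) \<and> t1 \<ge> 0 \<and> u = (\<Sum>j\<in>UNIV. l1 j *\<^sub>R Z j) + d1 - t1 *\<^sub>R w"
      unfolding S_def by blast
    show "c *\<^sub>R u \<in> S" unfolding S_def
      apply (rule CollectI, rule exI[of _ "\<lambda>j. c * l1 j"], rule exI[of _ "c *\<^sub>R d1"], rule exI[of _ "c * t1"])
      using 1 \<open>0 \<le> c\<close> by (auto simp: scaleR_sum_right scaleR_diff_right scaleR_add_right)
  qed
  have GS: "G \<subseteq> S"
  proof
    fix g assume "g \<in> G"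
    then consider j where "g = Z j" | l where "g = axis l 1" | "g = -w" unfolding G_def by blast
    then show "g \<in> S"
    proof cases
      case (1 j)
      have "(\<Sum>i\<in>UNIV. (if i = j then 1 else 0) *\<^sub>R Z i) = (\<Sum>i\<in>UNIV. if i = j then Z i else 0)"
        by (rule sum.cong) auto
      also have "\<dots> = Z j" by simp
      finally have e: "(\<Sum>i\<in>UNIV. (if i = j then 1 else 0) *\<^sub>R Z i) = Z j" .
      show ?thesis unfolding S_def 1
        apply (intro CollectI exI[of _ "\<lambda>i. if i = j then 1 else 0"] exI[of _ 0])
        by (auto simp: e)
    next
      case (2 l) then show ?thesis unfolding S_def
        apply (intro CollectI exI[of _ "\<lambda>i. 0"] exI[of _ "axis l 1"] exI[of _ 0])
        by (auto simp: axis_def)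
    next
      case 3 show ?thesis unfolding S_def 3
        apply (rule CollectI, rule exI[of _ "\<lambda>i. 0"], rule exI[of _ 0], rule exI[of _ 1])
        by auto
    qed
  qed
  have hS: "convex_cone hull G \<subseteq> S" using hull_minimal[of G S convex_cone] GS ccS by blast
  have wpos: "a \<bullet> w \<ge> 0" if "\<forall>j. a \<bullet> Z j \<ge> 0" for a
    using that pi by (simp add: wdef inner_sum_right sum_nonneg)
  have "\<forall>k. \<exists>a. (\<forall>g\<in>G. a \<bullet> g \<ge> 0) \<and> a \<bullet> (w - axis k 1) < 0"
  proof
    fix k
    have "w - axis k 1 \<notin> S" using par unfolding S_def by blast
    then show "\<exists>a. (\<forall>g\<in>G. a \<bullet> g \<ge> 0) \<and> a \<bullet> (w - axis k 1) < 0"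
      using cone_sep[OF finG] hS by blast
  qed
  then obtain A where A: "\<And>k. (\<forall>g\<in>G. A k \<bullet> g \<ge> 0) \<and> A k \<bullet> (w - axis k 1) < 0" by metis
  have AZ: "A k \<bullet> Z j \<ge> 0" for k j using A[of k] unfolding G_def by blast
  have Aax: "A k $ l \<ge> 0" for k l
  proof -
    have "axis l 1 \<in> G" unfolding G_def by blast
    then have "A k \<bullet> axis l 1 \<ge> 0" using A[of k] by blast
    then show ?thesis by (simp add: inner_axis)
  qed
  have Aw: "A k \<bullet> w \<le> 0" for k using A[of k] unfolding G_def by auto
  have Aw0: "A k \<bullet> w = 0" for k using Aw[of k] wpos[of "A k"] AZ[of k] by auto
  have Akk: "A k $ k > 0" for k using A[of k] Aw0[of k] by (simp add: inner_diff_right inner_axis)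
  define p where "p = (\<Sum>k\<in>UNIV. A k)"
  have "p $ l > 0" for l
  proof -
    have "A l $ l \<le> (\<Sum>k\<in>UNIV. A k $ l)" by (rule member_le_sum) (auto simp: Aax)
    then show ?thesis using Akk[of l] by (simp add: p_def)
  qed
  moreover have "p \<bullet> Z j \<ge> 0" for j by (simp add: p_def inner_sum_left sum_nonneg AZ)
  moreover have "p \<bullet> w \<le> 0" by (simp add: p_def inner_sum_left Aw0)
  ultimately show ?thesis by blast
qed
lemma inner_plus_vec:
  fixes q :: "real^('i::finite + 'r::finite)"
  shows "q \<bullet> (\<chi> a. case a of Inl i \<Rightarrow> f i | Inr r \<Rightarrow> g r) =
     (\<Sum>i\<in>UNIV. q$Inl i * f i) + (\<Sum>r\<in>UNIV. q$Inr r * g r)"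
proof -
  have "q \<bullet> (\<chi> a. case a of Inl i \<Rightarrow> f i | Inr r \<Rightarrow> g r) =
     (\<Sum>a\<in>UNIV <+> UNIV. q$a * (case a of Inl i \<Rightarrow> f i | Inr r \<Rightarrow> g r))"
    by (simp add: inner_vec_def)
  also have "\<dots> = (\<Sum>i\<in>UNIV. q$Inl i * f i) + (\<Sum>r\<in>UNIV. q$Inr r * g r)"
    by (subst sum.Plus) (auto simp: o_def)
  finally show ?thesis .
qed

lemma tvg_lower:
  fixes x :: "'i::finite \<Rightarrow> 'j::finite \<Rightarrow> real" and y :: "'r::finite \<Rightarrow> 'j \<Rightarrow> real"
  assumes "\<forall>j. \<pi> j \<ge> 0"
  shows "tvg_obj (\<lambda>i. \<Sum>j\<in>UNIV. x i j * \<pi> j) (\<lambda>r. \<Sum>j\<in>UNIV. y r j * \<pi> j) v u =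
     (\<Sum>j\<in>UNIV. \<pi> j * ((\<Sum>i\<in>UNIV. v i * x i j) - (\<Sum>r\<in>UNIV. u r * y r j)))"
proof -
  have 1: "(\<Sum>i\<in>UNIV. v i * (\<Sum>j\<in>UNIV. x i j * \<pi> j)) = (\<Sum>j\<in>UNIV. \<pi> j * (\<Sum>i\<in>UNIV. v i * x i j))"
    by (simp add: sum_distrib_left sum_distrib_right algebra_simps) (rule sum.swap)
  have 2: "(\<Sum>r\<in>UNIV. u r * (\<Sum>j\<in>UNIV. y r j * \<pi> j)) = (\<Sum>j\<in>UNIV. \<pi> j * (\<Sum>r\<in>UNIV. u r * y r j))"
    by (simp add: sum_distrib_left sum_distrib_right algebra_simps) (rule sum.swap)
  show ?thesis unfolding tvg_obj_def 1 2 by (simp add: right_diff_distrib sum_subtractf)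
qed

theorem theorem2:
  fixes x :: "'i::finite \<Rightarrow> 'j::finite \<Rightarrow> real"
    and y :: "'r::finite \<Rightarrow> 'j \<Rightarrow> real"
    and k :: 'j and \<tau> :: real
    and Q :: "'i \<Rightarrow> real" and P :: "'r \<Rightarrow> real" and \<pi> :: "'j \<Rightarrow> real"
  assumes "CARD('j) \<ge> 2 * (CARD('i) + CARD('r))"
    and "\<forall>i j. x i j > 0" and "\<forall>r j. y r j > 0"
    and "\<tau> > 0"
    and "tap_optimal \<tau> x y k Q P \<pi>"
  shows "(\<exists>v u. tvg_optimal x y (bench_x x \<pi>) (bench_y y \<pi>) 1 v u) \<and>
         (\<forall>v u. tvg_optimal x y (bench_x x \<pi>) (bench_y y \<pi>) 1 v u \<longrightarrow>
                pt_efficiency (bench_x x \<pi>) (bench_y y \<pi>) v u = 1)"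
proof -
  note xpos = assms(2)[rule_format] and ypos = assms(3)[rule_format]
  define xh where "xh = bench_x x \<pi>"
  define yh where "yh = bench_y y \<pi>"
  have feas: "tap_feasible x y k Q P \<pi>" and opt: "\<And>Q' P' \<pi>'. tap_feasible x y k Q' P' \<pi>' \<Longrightarrow> tap_obj \<tau> Q' P' \<le> tap_obj \<tau> Q P"
    using assms(5) unfolding tap_optimal_def by auto
  have cx: "\<And>i. xh i + Q i * x i k = x i k" and cy: "\<And>r. - yh r + P r * y r k = - y r k"
    and pi0: "\<And>j. \<pi> j \<ge> 0" and Q0: "\<And>i. Q i \<ge> 0" and P0: "\<And>r. P r \<ge> 0"
    using feas unfolding tap_feasible_def xh_def yh_def bench_x_def bench_y_def by auto
  have yhpos: "yh r > 0" for r
  proof -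
    have "yh r = y r k * (1 + P r)" using cy[of r] by (simp add: algebra_simps)
    then show ?thesis using ypos[of r k] P0[of r] by simp
  qed
  have "\<exists>j. \<pi> j \<noteq> 0"
  proof (rule ccontr)
    assume "\<not> ?thesis" then have "yh r = 0" for r by (simp add: yh_def bench_y_def)
    then show False using yhpos[of undefined] by simp
  qed
  then obtain j0 where "\<pi> j0 > 0" using pi0 by (metis less_eq_real_def)
  have xhpos: "xh i > 0" for i
  proof -
    have "x i j0 * \<pi> j0 \<le> xh i" unfolding xh_def bench_x_def
      by (rule member_le_sum) (use xpos pi0 in \<open>auto intro: mult_nonneg_nonneg less_imp_le\<close>)
    moreover have "x i j0 * \<pi> j0 > 0" using xpos \<open>\<pi> j0 > 0\<close> by simp
    ultimately show ?thesis by simp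
  qed
  define Z :: "'j \<Rightarrow> real^('i + 'r)" where "Z j = (\<chi> a. case a of Inl i \<Rightarrow> x i j | Inr r \<Rightarrow> - y r j)" for j
  define w :: "real^('i + 'r)" where "w = (\<chi> a. case a of Inl i \<Rightarrow> xh i | Inr r \<Rightarrow> - yh r)"
  have wdef: "w = (\<Sum>j\<in>UNIV. \<pi> j *\<^sub>R Z j)"
    unfolding vec_eq_iff
  proof
    fix a show "w $ a = (\<Sum>j\<in>UNIV. \<pi> j *\<^sub>R Z j) $ a"
      by (cases a) (simp_all add: w_def Z_def xh_def yh_def bench_x_def bench_y_def mult.commute sum_negf)
  qed
  have par: "w - axis k0 1 \<noteq> (\<Sum>j\<in>UNIV. lam j *\<^sub>R Z j) + d - t *\<^sub>R w"
    if lam0: "\<forall>j. lam j \<ge> 0" and d0: "\<forall>l. d$l \<ge> 0" and t0: "t \<ge> 0" for k0 lam d t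
  proof
    assume E: "w - axis k0 1 = (\<Sum>j\<in>UNIV. lam j *\<^sub>R Z j) + d - t *\<^sub>R w"
    define s where "s = 1 + t"
    have s0: "s > 0" using t0 by (simp add: s_def)
    define sx where "sx i = (\<Sum>j\<in>UNIV. x i j * (lam j / s))" for i
    define sy where "sy r = (\<Sum>j\<in>UNIV. y r j * (lam j / s))" for r
    have sxle: "sx i \<le> xh i" and sxlt: "k0 = Inl i \<Longrightarrow> sx i < xh i" for i
    proof -
      have "(w - axis k0 1) $ Inl i = ((\<Sum>j\<in>UNIV. lam j *\<^sub>R Z j) + d - t *\<^sub>R w) $ Inl i" by (simp only: E)
      then have e: "xh i - (if Inl i = k0 then 1 else 0) = (\<Sum>j\<in>UNIV. lam j * x i j) + d $ Inl i - t * xh i"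
        by (simp add: w_def Z_def axis_def)
      have "sx i = (\<Sum>j\<in>UNIV. lam j * x i j) / s"
        by (simp add: sx_def sum_divide_distrib algebra_simps)
      also have "(\<Sum>j\<in>UNIV. lam j * x i j) = s * xh i - (if Inl i = k0 then 1 else 0) - d $ Inl i"
        using e by (simp add: s_def algebra_simps)
      finally have sxe: "sx i = (s * xh i - (if Inl i = k0 then 1 else 0) - d $ Inl i) / s" .
      show "sx i \<le> xh i" unfolding sxe using s0 spec[OF d0, of "Inl i"] by (simp add: divide_le_eq algebra_simps)
      show "k0 = Inl i \<Longrightarrow> sx i < xh i" unfolding sxe using s0 spec[OF d0, of "Inl i"] by (simp add: divide_less_eq algebra_simps)
    qed
    have syge: "sy r \<ge> yh r" and sygt: "k0 = Inr r \<Longrightarrow> sy r > yh r" for r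
    proof -
      have "(w - axis k0 1) $ Inr r = ((\<Sum>j\<in>UNIV. lam j *\<^sub>R Z j) + d - t *\<^sub>R w) $ Inr r" by (simp only: E)
      then have e: "- yh r - (if Inr r = k0 then 1 else 0) = - (\<Sum>j\<in>UNIV. lam j * y r j) + d $ Inr r + t * yh r"
        by (simp add: w_def Z_def axis_def sum_negf)
      have "sy r = (\<Sum>j\<in>UNIV. lam j * y r j) / s"
        by (simp add: sy_def sum_divide_distrib algebra_simps)
      also have "(\<Sum>j\<in>UNIV. lam j * y r j) = s * yh r + (if Inr r = k0 then 1 else 0) + d $ Inr r"
        using e by (simp add: s_def algebra_simps)
      finally have sye: "sy r = (s * yh r + (if Inr r = k0 then 1 else 0) + d $ Inr r) / s" .
      show "sy r \<ge> yh r" unfolding sye using s0 spec[OF d0, of "Inr r"] by (simp add: le_divide_eq algebra_simps)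
      show "k0 = Inr r \<Longrightarrow> sy r > yh r" unfolding sye using s0 spec[OF d0, of "Inr r"] by (simp add: less_divide_eq algebra_simps)
    qed
    define Q' where "Q' i = 1 - sx i / x i k" for i
    define P' where "P' r = sy r / y r k - 1" for r
    have QQ: "Q i \<le> Q' i" for i
    proof -
      have "Q i = 1 - xh i / x i k" using cx[of i] xpos[of i k] by (simp add: field_simps)
      then show ?thesis unfolding Q'_def using sxle[of i] xpos[of i k] by (simp add: divide_right_mono)
    qed
    have QQs: "k0 = Inl i \<Longrightarrow> Q i < Q' i" for i
    proof -
      have "Q i = 1 - xh i / x i k" using cx[of i] xpos[of i k] by (simp add: field_simps)
      then show "k0 = Inl i \<Longrightarrow> ?thesis" unfolding Q'_def using sxlt[of i] xpos[of i k] by (simp add: divide_strict_right_mono)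
    qed
    have PP: "P r \<le> P' r" for r
    proof -
      have "P r = yh r / y r k - 1" using cy[of r] ypos[of r k] by (simp add: field_simps)
      then show ?thesis unfolding P'_def using syge[of r] ypos[of r k] by (simp add: divide_right_mono)
    qed
    have PPs: "k0 = Inr r \<Longrightarrow> P r < P' r" for r
    proof -
      have "P r = yh r / y r k - 1" using cy[of r] ypos[of r k] by (simp add: field_simps)
      then show "k0 = Inr r \<Longrightarrow> ?thesis" unfolding P'_def using sygt[of r] ypos[of r k] by (simp add: divide_strict_right_mono)
    qed
    have "tap_feasible x y k Q' P' (\<lambda>j. lam j / s)"
      unfolding tap_feasible_def
    proof (intro conjI allI)
      fix i show "(\<Sum>j\<in>UNIV. x i j * (lam j / s)) + Q' i * x i k = x i k"
        using xpos[of i k] by (simp add: Q'_def sx_def field_simps)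
    next
      fix r show "- (\<Sum>j\<in>UNIV. y r j * (lam j / s)) + P' r * y r k = - y r k"
        using ypos[of r k] by (simp add: P'_def sy_def field_simps)
    next
      fix j show "0 \<le> lam j / s" using lam0 s0 by simp
    next
      fix i show "0 \<le> Q' i" using QQ[of i] Q0[of i] by simp
    next
      fix r show "0 \<le> P' r" using PP[of r] P0[of r] by simp
    qed
    then have le: "tap_obj \<tau> Q' P' \<le> tap_obj \<tau> Q P" by (rule opt)
    have "(\<Sum>i\<in>UNIV. Q i) + (\<Sum>r\<in>UNIV. P r) < (\<Sum>i\<in>UNIV. Q' i) + (\<Sum>r\<in>UNIV. P' r)"
    proof (cases k0)
      case (Inl i0)
      have "(\<Sum>i\<in>UNIV. Q i) < (\<Sum>i\<in>UNIV. Q' i)"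
        by (rule sum_strict_mono_ex1) (use QQ QQs Inl in auto)
      moreover have "(\<Sum>r\<in>UNIV. P r) \<le> (\<Sum>r\<in>UNIV. P' r)" by (rule sum_mono) (use PP in auto)
      ultimately show ?thesis by simp
    next
      case (Inr r0)
      have "(\<Sum>r\<in>UNIV. P r) < (\<Sum>r\<in>UNIV. P' r)"
        by (rule sum_strict_mono_ex1) (use PP PPs Inr in auto)
      moreover have "(\<Sum>i\<in>UNIV. Q i) \<le> (\<Sum>i\<in>UNIV. Q' i)" by (rule sum_mono) (use QQ in auto)
      ultimately show ?thesis by simp
    qed
    then have "tap_obj \<tau> Q P < tap_obj \<tau> Q' P'"
      using assms(4) by (simp add: tap_obj_def flip: sum_distrib_right distrib_right)
    with le show False by simp
  qed
  obtain p where pp: "\<And>l. p$l > 0" and pZ: "\<And>j. p \<bullet> Z j \<ge> 0" and pw: "p \<bullet> w \<le> 0"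
    using pos_support[OF _ wdef par] pi0 by blast
  define c where "c = (\<Sum>i\<in>UNIV. 1 / (xh i * p$Inl i)) + (\<Sum>r\<in>UNIV. 1 / (yh r * p$Inr r))"
  define v where "v i = c * p$Inl i" for i
  define u where "u r = c * p$Inr r" for r
  have pZe: "(\<Sum>i\<in>UNIV. v i * x i j) - (\<Sum>r\<in>UNIV. u r * y r j) = c * (p \<bullet> Z j)" for j
    by (simp add: Z_def inner_plus_vec v_def u_def sum_distrib_left sum_negf algebra_simps)
  have pwe: "tvg_obj xh yh v u = c * (p \<bullet> w)"
    by (simp add: tvg_obj_def w_def inner_plus_vec v_def u_def sum_distrib_left sum_negf algebra_simps)
  have c1: "c \<ge> 1 / (xh i * p$Inl i)" for i
  proof -
    have "1 / (xh i * p$Inl i) \<le> (\<Sum>i\<in>UNIV. 1 / (xh i * p$Inl i))"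
      by (rule member_le_sum) (use xhpos pp in \<open>auto intro: less_imp_le\<close>)
    moreover have "0 \<le> (\<Sum>r\<in>UNIV. 1 / (yh r * p$Inr r))"
      by (rule sum_nonneg) (use yhpos pp in \<open>auto intro: less_imp_le\<close>)
    ultimately show ?thesis by (simp add: c_def)
  qed
  have c2: "c \<ge> 1 / (yh r * p$Inr r)" for r
  proof -
    have "1 / (yh r * p$Inr r) \<le> (\<Sum>r\<in>UNIV. 1 / (yh r * p$Inr r))"
      by (rule member_le_sum) (use yhpos pp in \<open>auto intro: less_imp_le\<close>)
    moreover have "0 \<le> (\<Sum>i\<in>UNIV. 1 / (xh i * p$Inl i))"
      by (rule sum_nonneg) (use xhpos pp in \<open>auto intro: less_imp_le\<close>)
    ultimately show ?thesis by (simp add: c_def)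
  qed
  have cpos: "c \<ge> 0" using c1[of undefined] xhpos pp by (smt (verit) divide_pos_pos mult_pos_pos)
  have vfeas: "tvg_feasible x y xh yh 1 v u"
    unfolding tvg_feasible_def
  proof (intro conjI allI)
    fix j show "0 \<le> (\<Sum>i\<in>UNIV. v i * x i j) - (\<Sum>r\<in>UNIV. u r * y r j)"
      unfolding pZe using cpos pZ[of j] by simp
  next
    fix i
    have "xh i * p$Inl i > 0" using xhpos pp by simp
    then show "1 \<le> xh i * v i" using c1[of i] by (simp add: v_def divide_le_eq algebra_simps)
  next
    fix r
    have "yh r * p$Inr r > 0" using yhpos pp by simp
    then show "1 \<le> yh r * u r" using c2[of r] by (simp add: u_def divide_le_eq algebra_simps)
  qed
  have lower: "tvg_obj xh yh v' u' \<ge> 0" if "tvg_feasible x y xh yh 1 v' u'" for v' u'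
  proof -
    have "tvg_obj xh yh v' u' = (\<Sum>j\<in>UNIV. \<pi> j * ((\<Sum>i\<in>UNIV. v' i * x i j) - (\<Sum>r\<in>UNIV. u' r * y r j)))"
      unfolding xh_def yh_def bench_x_def[abs_def] bench_y_def[abs_def] by (rule tvg_lower) (use pi0 in auto)
    also have "\<dots> \<ge> 0" using that pi0 unfolding tvg_feasible_def by (auto intro!: sum_nonneg mult_nonneg_nonneg)
    finally show ?thesis .
  qed
  have obj0: "tvg_obj xh yh v u \<le> 0" unfolding pwe using cpos pw by (simp add: mult_nonneg_nonpos)
  have part1: "tvg_optimal x y xh yh 1 v u"
    unfolding tvg_optimal_def using vfeas obj0 lower by (auto intro: order_trans)
  have part2: "pt_efficiency xh yh v' u' = 1" if o: "tvg_optimal x y xh yh 1 v' u'" for v' u'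
  proof -
    have f: "tvg_feasible x y xh yh 1 v' u'" using o unfolding tvg_optimal_def by auto
    have "tvg_obj xh yh v' u' \<le> tvg_obj xh yh v u" using o vfeas unfolding tvg_optimal_def by auto
    then have "tvg_obj xh yh v' u' = 0" using obj0 lower[OF f] by simp
    then have eq: "(\<Sum>r\<in>UNIV. u' r * yh r) = (\<Sum>i\<in>UNIV. v' i * xh i)" unfolding tvg_obj_def by simp
    have "(\<Sum>i\<in>UNIV. v' i * xh i) > 0"
    proof (rule sum_pos)
      fix i show "0 < v' i * xh i" using f unfolding tvg_feasible_def by (smt (verit) mult.commute)
    qed auto
    define B where "B = (\<Sum>i\<in>UNIV. v' i * xh i)"
    have Bp: "B > 0" using \<open>(\<Sum>i\<in>UNIV. v' i * xh i) > 0\<close> by (simp add: B_def)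
    have a: "(\<Sum>r\<in>UNIV. (1/B * u' r) * yh r) = 1/B * B"
      by (simp only: mult.assoc flip: sum_distrib_left) (simp add: eq B_def)
    have b: "(\<Sum>i\<in>UNIV. (1/B * v' i) * xh i) = 1/B * B"
      by (simp only: mult.assoc flip: sum_distrib_left) (simp add: B_def)
    show ?thesis
      unfolding pt_efficiency_def Let_def B_def[symmetric] a b using Bp by simp
  qed
  show ?thesis using part1 part2 unfolding xh_def yh_def by blast
qed

end
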